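(* Consider a seller with one item and a single ex-interim rational buyer; the item's quality $q\in Q=[q_1,q_2]$ has density $g$ and is observed only by the seller; the buyer's valuation is $v(q)\ge0$, monotone increasing in $q$. Consider the problem of maximizing $Rev_{sig}(\pi,p)=p\int_Q\pi(q)g(q)\,\mathrm{d}q$ over $\pi:Q\to[0,1]$ and $p$ subject to $\int_Q\pi(q)[v(q)-p]g(q)\,\mathrm{d}q\ge0$ and $\int_Q\pi(q)[v(q)-p]g(q)\,\mathrm{d}q\ge\mathbb{E}_{q}[v(q)]-p$. Then $\pi^*(q)=1$ for all $q\in Q$ and $p^*=\mathbb{E}_q[v(q)]$ form an optimal solution.
   Context: $\pi(q)$ is the probability that the seller sends signal 1 ("buy") at quality $q$, and signal 0 ("not buy") otherwise; the constraints express obedience of an ex-interim rational buyer, who buys iff his posterior expected valuation of the item is at least $p$. $\mathbb{E}_q$ denotes expectation under the prior density $g$. *)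

theory Defs
  imports "HOL-Analysis.Analysis"
begin

definition expect_q :: "real \<Rightarrow> real \<Rightarrow> (real \<Rightarrow> real) \<Rightarrow> (real \<Rightarrow> real) \<Rightarrow> real" where
  "expect_q q1 q2 g f = (LINT q:{q1..q2}|lborel. f q * g q)"

definition Rev_sig :: "real \<Rightarrow> real \<Rightarrow> (real \<Rightarrow> real) \<Rightarrow> (real \<Rightarrow> real) \<Rightarrow> real \<Rightarrow> real" where
  "Rev_sig q1 q2 g \<pi> p = p * (LINT q:{q1..q2}|lborel. \<pi> q * g q)"

definition feasible_sig :: "real \<Rightarrow> real \<Rightarrow> (real \<Rightarrow> real) \<Rightarrow> (real \<Rightarrow> real) \<Rightarrow> (real \<Rightarrow> real) \<Rightarrow> real \<Rightarrow> bool" where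
  "feasible_sig q1 q2 g v \<pi> p \<longleftrightarrow>
     set_borel_measurable lborel {q1..q2} \<pi> \<and>
     (\<forall>q\<in>{q1..q2}. 0 \<le> \<pi> q \<and> \<pi> q \<le> 1) \<and>
     (LINT q:{q1..q2}|lborel. \<pi> q * (v q - p) * g q) \<ge> 0 \<and>
     (LINT q:{q1..q2}|lborel. \<pi> q * (v q - p) * g q) \<ge> expect_q q1 q2 g v - p"

end

theory Submission
  imports Defs
begin

lemma sbm_iff:
  fixes f :: "real \<Rightarrow> real"
  shows "set_borel_measurable lborel {a..b} f \<longleftrightarrow> f \<in> borel_measurable (restrict_space borel {a..b})"
proof -
  have "set_borel_measurable lborel {a..b} f \<longleftrightarrow> f \<in> borel_measurable (restrict_space lborel {a..b})"
    unfolding set_borel_measurable_def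
    by (subst borel_measurable_restrict_space_iff) (auto simp: sets_lborel)
  also have "\<dots> \<longleftrightarrow> f \<in> borel_measurable (restrict_space borel {a..b})"
  proof -
    have eq: "sets (restrict_space lborel {a..b}) = sets (restrict_space borel {a..b})"
      by (rule sets_restrict_space_cong) simp
    show ?thesis by (subst measurable_cong_sets[OF eq refl, of borel]) (rule refl)
  qed
  finally show ?thesis .
qed

lemma int_bounded_mult:
  fixes h g :: "real \<Rightarrow> real"
  assumes g: "set_integrable lborel {a..b} g"
    and h: "set_borel_measurable lborel {a..b} h"
    and bd: "\<And>x. x \<in> {a..b} \<Longrightarrow> \<bar>h x\<bar> \<le> C"
  shows "set_integrable lborel {a..b} (\<lambda>x. h x * g x)"
proof (rule set_integrable_bound[where f="\<lambda>x. C * g x"])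
  show "set_integrable lborel {a..b} (\<lambda>x. C * g x)" using g by simp
  have "set_borel_measurable lborel {a..b} g"
    using g unfolding set_integrable_def set_borel_measurable_def
    by (simp add: borel_measurable_integrable)
  then show "set_borel_measurable lborel {a..b} (\<lambda>x. h x * g x)"
    using h unfolding sbm_iff by measurable
  show "AE x in lborel. x \<in> {a..b} \<longrightarrow> norm (h x * g x) \<le> norm (C * g x)"
  proof (rule AE_I2, rule impI)
    fix x assume x: "x \<in> {a..b}"
    have "\<bar>h x\<bar> * \<bar>g x\<bar> \<le> C * \<bar>g x\<bar>" using bd[OF x] by (simp add: mult_right_mono)
    moreover have "0 \<le> C" using bd[OF x] by linarith
    ultimately show "norm (h x * g x) \<le> norm (C * g x)" by (simp add: abs_mult)
  qed
qed

theorem mainTheorem6: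
  fixes q1 q2 :: real and g v :: "real \<Rightarrow> real"
  assumes "q1 < q2"
    and g_nonneg: "\<forall>q\<in>{q1..q2}. 0 \<le> g q"
    and g_int: "set_integrable lborel {q1..q2} g"
    and g_density: "(LINT q:{q1..q2}|lborel. g q) = 1"
    and v_nonneg: "\<forall>q\<in>{q1..q2}. 0 \<le> v q"
    and v_mono: "mono_on {q1..q2} v"
  shows "feasible_sig q1 q2 g v (\<lambda>_. 1) (expect_q q1 q2 g v) \<and>
         (\<forall>\<pi> p. feasible_sig q1 q2 g v \<pi> p \<longrightarrow>
            Rev_sig q1 q2 g \<pi> p \<le> Rev_sig q1 q2 g (\<lambda>_. 1) (expect_q q1 q2 g v))"
proof -
  define E where "E = expect_q q1 q2 g v"
  have vm: "set_borel_measurable lborel {q1..q2} v"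
    unfolding sbm_iff by (rule borel_measurable_mono_on_fnc[OF v_mono])
  have vbd: "\<bar>v x\<bar> \<le> v q2" if "x \<in> {q1..q2}" for x
    using that v_nonneg v_mono \<open>q1 < q2\<close> by (auto simp: mono_on_def)
  have vg: "set_integrable lborel {q1..q2} (\<lambda>x. v x * g x)"
    by (rule int_bounded_mult[OF g_int vm vbd])
  have E_eq: "E = (LINT q:{q1..q2}|lborel. v q * g q)" unfolding E_def expect_q_def ..
  have one: "(LINT q:{q1..q2}|lborel. 1 * g q) = 1" using g_density by simp
  have rev1: "Rev_sig q1 q2 g (\<lambda>_. 1) E = E" unfolding Rev_sig_def using one by simp
  have c0: "(LINT q:{q1..q2}|lborel. 1 * (v q - E) * g q) = 0"
  proof -
    have "(LINT q:{q1..q2}|lborel. 1 * (v q - E) * g q) = (LINT q:{q1..q2}|lborel. v q * g q - E * g q)"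
      by (simp add: algebra_simps)
    also have "\<dots> = E - E * 1"
      using vg g_int g_density E_eq by (subst set_integral_diff) auto
    finally show ?thesis by simp
  qed
  have feas: "feasible_sig q1 q2 g v (\<lambda>_. 1) E"
    unfolding feasible_sig_def using c0 E_def by (simp add: set_borel_measurable_def)
  have opt: "Rev_sig q1 q2 g \<pi> p \<le> E" if f: "feasible_sig q1 q2 g v \<pi> p" for \<pi> p
  proof -
    have pm: "set_borel_measurable lborel {q1..q2} \<pi>" and pb: "\<forall>q\<in>{q1..q2}. 0 \<le> \<pi> q \<and> \<pi> q \<le> 1"
      and c1: "(LINT q:{q1..q2}|lborel. \<pi> q * (v q - p) * g q) \<ge> 0"
      using f unfolding feasible_sig_def by auto
    have pg: "set_integrable lborel {q1..q2} (\<lambda>x. \<pi> x * g x)"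
      by (rule int_bounded_mult[OF g_int pm, of 1]) (use pb in auto)
    have pvm: "set_borel_measurable lborel {q1..q2} (\<lambda>x. \<pi> x * v x)"
      using pm vm unfolding sbm_iff by measurable
    have pvg: "set_integrable lborel {q1..q2} (\<lambda>x. (\<pi> x * v x) * g x)"
    proof (rule int_bounded_mult[OF g_int pvm, of "v q2"])
      fix x assume x: "x \<in> {q1..q2}"
      have "\<pi> x * \<bar>v x\<bar> \<le> \<bar>v x\<bar>" using pb x by (simp add: mult_left_le_one_le)
      then show "\<bar>\<pi> x * v x\<bar> \<le> v q2" using vbd[OF x] pb x by (simp add: abs_mult)
    qed
    have "(LINT q:{q1..q2}|lborel. \<pi> q * (v q - p) * g q)
        = (LINT q:{q1..q2}|lborel. (\<pi> q * v q) * g q - p * (\<pi> q * g q))"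
      by (simp add: algebra_simps)
    also have "\<dots> = (LINT q:{q1..q2}|lborel. (\<pi> q * v q) * g q) - p * (LINT q:{q1..q2}|lborel. \<pi> q * g q)"
      using pvg pg by (subst set_integral_diff) auto
    finally have A: "p * (LINT q:{q1..q2}|lborel. \<pi> q * g q) \<le> (LINT q:{q1..q2}|lborel. (\<pi> q * v q) * g q)"
      using c1 by linarith
    have B: "(LINT q:{q1..q2}|lborel. (\<pi> q * v q) * g q) \<le> (LINT q:{q1..q2}|lborel. v q * g q)"
    proof (rule set_integral_mono[OF pvg vg])
      fix x assume x: "x \<in> {q1..q2}"
      have "\<pi> x * v x \<le> v x" using pb x v_nonneg by (simp add: mult_left_le_one_le)
      then show "\<pi> x * v x * g x \<le> v x * g x" using g_nonneg x by (simp add: mult_right_mono)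
    qed
    show ?thesis unfolding Rev_sig_def using A B E_eq by linarith
  qed
  show ?thesis using feas opt rev1 unfolding E_def by auto
qed

end
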